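(* For any collective choice problem $\mathcal C$ and every $\delta>0$, there exists $\eta_\delta>0$ such that $Q(x,\eta_\delta)\ne\emptyset$ for all $x\in\Upsilon_\delta$.
   Context: Collective choice problem $\mathcal C$: voters $N=\{1,\dots,n\}$ ($n$ odd), agenda setter $A$, compact metrizable policy space $X$, continuous preferences with continuous utilities $u_i$. $y\succ_M x$: a strict majority of voters strictly prefer $y$ to $x$. $\mathcal E$ is the set of Unimprovable policies ($x$ such that no $y$ has $y\succ_A x$ and $y\succ_M x$). For $\delta>0$, $\Upsilon_\delta=\{x\in X:\min_{y\in\mathcal E}u_A(y)\ge u_A(x)+\delta\}$. For $x\in X$, $\eta>0$, $Q(x,\eta)$ is the set of $y\in X$ with $u_A(y)\ge u_A(x)+\eta$ such that some strict majority $S\subseteq N$ has $u_i(y)\ge u_i(x)+\eta$ for all $i\in S$. *)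

theory Defs
  imports "HOL-Analysis.Analysis"
begin

text \<open>Voters are N = {1..n}; voter i has utility u i; the agenda setter has utility uA;
  the policy space is a set X in a metric space.\<close>

definition voters :: "nat \<Rightarrow> nat set" where
  "voters n = {1..n}"

definition strict_majority :: "nat \<Rightarrow> nat set \<Rightarrow> bool" where
  "strict_majority n S \<longleftrightarrow> S \<subseteq> voters n \<and> 2 * card S > n"

definition maj_pref :: "nat \<Rightarrow> (nat \<Rightarrow> 'a \<Rightarrow> real) \<Rightarrow> 'a \<Rightarrow> 'a \<Rightarrow> bool" where
  "maj_pref n u y x \<longleftrightarrow> strict_majority n {i \<in> voters n. u i y > u i x}"

definition unimprovable ::
  "'a set \<Rightarrow> nat \<Rightarrow> (nat \<Rightarrow> 'a \<Rightarrow> real) \<Rightarrow> ('a \<Rightarrow> real) \<Rightarrow> 'a set" where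
  "unimprovable X n u uA =
     {x \<in> X. \<not> (\<exists>y\<in>X. uA y > uA x \<and> maj_pref n u y x)}"

definition Upsilon ::
  "'a set \<Rightarrow> nat \<Rightarrow> (nat \<Rightarrow> 'a \<Rightarrow> real) \<Rightarrow> ('a \<Rightarrow> real) \<Rightarrow> real \<Rightarrow> 'a set" where
  "Upsilon X n u uA \<delta> =
     {x \<in> X. \<forall>y \<in> unimprovable X n u uA. uA y \<ge> uA x + \<delta>}"

definition Qset ::
  "'a set \<Rightarrow> nat \<Rightarrow> (nat \<Rightarrow> 'a \<Rightarrow> real) \<Rightarrow> ('a \<Rightarrow> real) \<Rightarrow> 'a \<Rightarrow> real \<Rightarrow> 'a set" where
  "Qset X n u uA x \<eta> =
     {y \<in> X. uA y \<ge> uA x + \<eta> \<and>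
        (\<exists>S. strict_majority n S \<and> (\<forall>i\<in>S. u i y \<ge> u i x + \<eta>))}"

end

theory Submission
  imports Defs
begin

theorem lemma7:
  fixes X :: "'a::metric_space set" and n :: nat
    and u :: "nat \<Rightarrow> 'a \<Rightarrow> real" and uA :: "'a \<Rightarrow> real" and \<delta> :: real
  assumes "odd n"
    and "compact X"
    and "\<And>i. i \<in> voters n \<Longrightarrow> continuous_on X (u i)"
    and "continuous_on X uA"
    and "\<delta> > 0"
  shows "\<exists>\<eta>>0. \<forall>x \<in> Upsilon X n u uA \<delta>. Qset X n u uA x \<eta> \<noteq> {}"
proof (rule ccontr)
  let ?U = "Upsilon X n u uA \<delta>"
  assume "\<not> ?thesis"
  then have "\<forall>k::nat. \<exists>x\<in>?U. Qset X n u uA x (1 / real (Suc k)) = {}"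
    by auto
  then obtain xs where xs: "\<And>k. xs k \<in> ?U" "\<And>k. Qset X n u uA (xs k) (1 / real (Suc k)) = {}"
    by metis
  have xsX: "\<And>k. xs k \<in> X" using xs(1) unfolding Upsilon_def by auto
  obtain l r where lX: "l \<in> X" and r: "strict_mono r" and lim: "(xs \<circ> r) \<longlonglongrightarrow> l"
    using assms(2) xsX unfolding compact_def by metis
  let ?z = "xs \<circ> r"
  have zX: "eventually (\<lambda>k. ?z k \<in> X) sequentially" using xsX by simp
  have limA: "(\<lambda>k. uA (?z k)) \<longlonglongrightarrow> uA l"
    by (rule continuous_on_tendsto_compose[OF assms(4) lim lX zX])
  have limu: "(\<lambda>k. u i (?z k)) \<longlonglongrightarrow> u i l" if "i \<in> voters n" for i
    by (rule continuous_on_tendsto_compose[OF assms(3)[OF that] lim lX zX])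
  have "l \<in> ?U"
    unfolding Upsilon_def
  proof (intro CollectI conjI ballI lX)
    fix e assume e: "e \<in> unimprovable X n u uA"
    have "\<forall>k. uA (?z k) \<le> uA e - \<delta>" proof
      fix k show "uA (?z k) \<le> uA e - \<delta>" using xs(1)[of "r k"] e unfolding Upsilon_def by fastforce
    qed
    then have "uA l \<le> uA e - \<delta>"
      using limA by (intro tendsto_upperbound[where F=sequentially]) auto
    then show "uA e \<ge> uA l + \<delta>" by simp
  qed
  then have "l \<notin> unimprovable X n u uA"
    using assms(5) unfolding Upsilon_def by force
  then obtain y where yX: "y \<in> X" and yA: "uA y > uA l" and ym: "maj_pref n u y l"
    using lX unfolding unimprovable_def by auto
  define S where "S = {i \<in> voters n. u i y > u i l}"
  have Smaj: "strict_majority n S" using ym unfolding maj_pref_def S_def .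
  have Sfin: "finite S" unfolding S_def voters_def by auto
  have ev1: "\<forall>\<^sub>F \<eta> in at_right 0. \<forall>i\<in>S. u i y > u i l + 2 * \<eta>"
  proof (rule eventually_ball_finite[OF Sfin], rule ballI)
    fix i assume "i \<in> S"
    then have "u i y - u i l > 0" unfolding S_def by auto
    then show "\<forall>\<^sub>F \<eta> in at_right 0. u i y > u i l + 2 * \<eta>"
      unfolding eventually_at_right_field
      by (intro exI[of _ "(u i y - u i l) / 2"]) auto
  qed
  have ev2: "\<forall>\<^sub>F \<eta> in at_right 0. uA y > uA l + 2 * \<eta>"
    unfolding eventually_at_right_field using yA
    by (intro exI[of _ "(uA y - uA l) / 2"]) auto
  have ev0: "\<forall>\<^sub>F \<eta> in at_right (0::real). \<eta> > 0"
    by (simp add: eventually_at_right_less)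
  then have "\<exists>\<eta>. \<eta> > 0 \<and> uA y > uA l + 2 * \<eta> \<and> (\<forall>i\<in>S. u i y > u i l + 2 * \<eta>)"
    using eventually_happens'[OF trivial_limit_at_right_real eventually_conj[OF ev0 eventually_conj[OF ev2 ev1]]] by blast
  then obtain \<eta> where \<eta>: "\<eta> > 0" "uA y > uA l + 2 * \<eta>" "\<forall>i\<in>S. u i y > u i l + 2 * \<eta>"
    by blast
  have evA: "eventually (\<lambda>k. dist (uA (?z k)) (uA l) < \<eta>) sequentially"
    using tendstoD[OF limA \<eta>(1)] .
  have evU: "eventually (\<lambda>k. \<forall>i\<in>S. dist (u i (?z k)) (u i l) < \<eta>) sequentially"
  proof (rule eventually_ball_finite[OF Sfin], rule ballI)
    fix i assume "i \<in> S"
    then have "i \<in> voters n" unfolding S_def by auto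
    then show "eventually (\<lambda>k. dist (u i (?z k)) (u i l) < \<eta>) sequentially"
      using tendstoD[OF limu \<eta>(1)] by blast
  qed
  obtain N :: nat where N: "1 / \<eta> < real N" using reals_Archimedean2 by blast
  have evN: "eventually (\<lambda>k. 1 / real (Suc (r k)) \<le> \<eta>) sequentially"
    unfolding eventually_sequentially
  proof (intro exI[of _ N] allI impI)
    fix k assume "N \<le> k"
    then have "N \<le> r k" using seq_suble[OF r, of k] by linarith
    then have "1 / \<eta> < real (Suc (r k))" using N by simp
    then show "1 / real (Suc (r k)) \<le> \<eta>" using \<eta>(1)
      by (simp add: field_simps)
  qed
  obtain k where k1: "dist (uA (?z k)) (uA l) < \<eta>"
    and k2: "\<forall>i\<in>S. dist (u i (?z k)) (u i l) < \<eta>"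
    and k3: "1 / real (Suc (r k)) \<le> \<eta>"
    using eventually_happens'[OF _ eventually_conj[OF evA eventually_conj[OF evU evN]]] by auto
  have "y \<in> Qset X n u uA (xs (r k)) (1 / real (Suc (r k)))"
    unfolding Qset_def
  proof (intro CollectI conjI yX exI[of _ S] Smaj ballI)
    show "uA (xs (r k)) + 1 / real (Suc (r k)) \<le> uA y"
      using k1 k3 \<eta> by (simp add: dist_real_def abs_less_iff)
    fix i assume "i \<in> S"
    then show "u i (xs (r k)) + 1 / real (Suc (r k)) \<le> u i y"
      using k2 k3 \<eta> by (force simp add: dist_real_def abs_less_iff)
  qed
  then show False using xs(2)[of "r k"] by simp
qed

end
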